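(* If $\mathcal{F}: (\mathbb{X}, \dagger) \to (\mathbb{Y}, \dagger)$ is a dagger additive functor, then for any object $X \in \mathbb{X}$, $\mathfrak{G}[\mathcal{F}]_X: \mathfrak{G}\left[ (\mathbb{X}, \dagger) \right]_{X} \to \mathfrak{G}\left[ (\mathbb{X}, \dagger) \right]_{\mathcal{F}(X)}$ is a Markov functor.
   Context: Let $(\mathbb{X}, \dagger)$ and $(\mathbb{Y}, \dagger)$ be dagger additive categories (dagger categories enriched in abelian groups with additive dagger and finite biproducts satisfying $\pi_j^\dagger = \iota_j$). A map $p: B \to B$ is $\dagger$-positive if $p = \phi^\dagger \circ \phi$ for some $\phi$. For an object $X$, the Gauss construction $\mathfrak{G}\left[ (\mathbb{X}, \dagger) \right]_X$ is the Markov category with the objects of $\mathbb{X}$, maps $A \to B$ the triples $(f,p,x)$ with $f: A \to B$, $p: B \to B$ $\dagger$-positive, $x: X \to B$; identities $(\mathsf{id}_A,0,0)$; composition $(g,q,y) \circ (f,p,x) = (g \circ f, q + g \circ p \circ g^\dagger, y + g \circ x)$; monoidal product $A \oplus B$, $(f,p,x) \otimes (g,q,y) = \left(f \oplus g, p \oplus q, \begin{bmatrix} x \\ y \end{bmatrix}\right)$, unit the zero object, copy $\left(\begin{bmatrix} \mathsf{id}_A \\ \mathsf{id}_A \end{bmatrix}, 0, 0\right)$ and delete $(0,0,0)$. A dagger additive functor is a functor $\mathcal{F}: \mathbb{X} \to \mathbb{Y}$ that preserves the dagger ($\mathcal{F}(f^\dagger) = \mathcal{F}(f)^\dagger$) and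 preserves finite biproducts (equivalently, the abelian group structure of homsets). A Markov functor is a strong symmetric monoidal functor preserving the comonoid structure (up to the monoidal isomorphisms). The functor $\mathfrak{G}[\mathcal{F}]_X$ is defined on objects by $A \mapsto \mathcal{F}(A)$ and on maps by $(f,p,x) \mapsto (\mathcal{F}(f), \mathcal{F}(p), \mathcal{F}(x))$, with codomain $\mathfrak{G}\left[ (\mathbb{Y}, \dagger) \right]_{\mathcal{F}(X)}$. *)

theory Defs
  imports Main
begin

record ('o,'m) cat =
  cObj  :: "'o set"
  cHom  :: "'o \<Rightarrow> 'o \<Rightarrow> 'm set"
  cId   :: "'o \<Rightarrow> 'm"
  cComp :: "'m \<Rightarrow> 'm \<Rightarrow> 'm"   (* cComp C g f = g \<circ> f *)

definition is_category :: "('o,'m,'x) cat_scheme \<Rightarrow> bool" where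
  "is_category C \<longleftrightarrow>
     (\<forall>A\<in>cObj C. cId C A \<in> cHom C A A) \<and>
     (\<forall>A\<in>cObj C. \<forall>B\<in>cObj C. \<forall>D\<in>cObj C. \<forall>f g.
        f \<in> cHom C A B \<longrightarrow> g \<in> cHom C B D \<longrightarrow> cComp C g f \<in> cHom C A D) \<and>
     (\<forall>A\<in>cObj C. \<forall>B\<in>cObj C. \<forall>D\<in>cObj C. \<forall>E\<in>cObj C. \<forall>f g h.
        f \<in> cHom C A B \<longrightarrow> g \<in> cHom C B D \<longrightarrow> h \<in> cHom C D E \<longrightarrow>
        cComp C h (cComp C g f) = cComp C (cComp C h g) f) \<and>
     (\<forall>A\<in>cObj C. \<forall>B\<in>cObj C. \<forall>f. f \<in> cHom C A B \<longrightarrow>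
        cComp C (cId C B) f = f \<and> cComp C f (cId C A) = f)"

record ('o,'m) dacat = "('o,'m) cat" +
  dAdd  :: "'m \<Rightarrow> 'm \<Rightarrow> 'm"
  dNeg  :: "'m \<Rightarrow> 'm"
  dZero :: "'o \<Rightarrow> 'o \<Rightarrow> 'm"
  dDag  :: "'m \<Rightarrow> 'm"
  dZObj :: "'o"
  dBp   :: "'o \<Rightarrow> 'o \<Rightarrow> 'o"
  dIn1  :: "'o \<Rightarrow> 'o \<Rightarrow> 'm"
  dIn2  :: "'o \<Rightarrow> 'o \<Rightarrow> 'm"
  dPr1  :: "'o \<Rightarrow> 'o \<Rightarrow> 'm"
  dPr2  :: "'o \<Rightarrow> 'o \<Rightarrow> 'm"

definition is_dagger_additive :: "('o,'m) dacat \<Rightarrow> bool" where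
  "is_dagger_additive C \<longleftrightarrow> is_category C \<and>
     \<comment> \<open>enrichment in abelian groups\<close>
     (\<forall>A\<in>cObj C. \<forall>B\<in>cObj C.
        dZero C A B \<in> cHom C A B \<and>
        (\<forall>f\<in>cHom C A B. \<forall>g\<in>cHom C A B. dAdd C f g \<in> cHom C A B \<and> dAdd C f g = dAdd C g f) \<and>
        (\<forall>f\<in>cHom C A B. \<forall>g\<in>cHom C A B. \<forall>h\<in>cHom C A B.
            dAdd C (dAdd C f g) h = dAdd C f (dAdd C g h)) \<and>
        (\<forall>f\<in>cHom C A B. dAdd C (dZero C A B) f = f) \<and>
        (\<forall>f\<in>cHom C A B. dNeg C f \<in> cHom C A B \<and> dAdd C f (dNeg C f) = dZero C A B)) \<and>
     \<comment> \<open>bilinearity of composition\<close>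
     (\<forall>A\<in>cObj C. \<forall>B\<in>cObj C. \<forall>D\<in>cObj C.
        \<forall>f\<in>cHom C A B. \<forall>f'\<in>cHom C A B. \<forall>g\<in>cHom C B D. \<forall>g'\<in>cHom C B D.
          cComp C (dAdd C g g') f = dAdd C (cComp C g f) (cComp C g' f) \<and>
          cComp C g (dAdd C f f') = dAdd C (cComp C g f) (cComp C g f')) \<and>
     \<comment> \<open>additive dagger\<close>
     (\<forall>A\<in>cObj C. \<forall>B\<in>cObj C. \<forall>f\<in>cHom C A B.
        dDag C f \<in> cHom C B A \<and> dDag C (dDag C f) = f) \<and>
     (\<forall>A\<in>cObj C. dDag C (cId C A) = cId C A) \<and>
     (\<forall>A\<in>cObj C. \<forall>B\<in>cObj C. \<forall>D\<in>cObj C. \<forall>f\<in>cHom C A B. \<forall>g\<in>cHom C B D.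
        dDag C (cComp C g f) = cComp C (dDag C f) (dDag C g)) \<and>
     (\<forall>A\<in>cObj C. \<forall>B\<in>cObj C. \<forall>f\<in>cHom C A B. \<forall>g\<in>cHom C A B.
        dDag C (dAdd C f g) = dAdd C (dDag C f) (dDag C g)) \<and>
     \<comment> \<open>zero object\<close>
     dZObj C \<in> cObj C \<and> cId C (dZObj C) = dZero C (dZObj C) (dZObj C) \<and>
     \<comment> \<open>binary biproducts, with \<pi>_j^\<dagger> = \<iota>_j\<close>
     (\<forall>A\<in>cObj C. \<forall>B\<in>cObj C.
        dBp C A B \<in> cObj C \<and>
        dIn1 C A B \<in> cHom C A (dBp C A B) \<and> dIn2 C A B \<in> cHom C B (dBp C A B) \<and>
        dPr1 C A B \<in> cHom C (dBp C A B) A \<and> dPr2 C A B \<in> cHom C (dBp C A B) B \<and>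
        cComp C (dPr1 C A B) (dIn1 C A B) = cId C A \<and>
        cComp C (dPr2 C A B) (dIn2 C A B) = cId C B \<and>
        cComp C (dPr1 C A B) (dIn2 C A B) = dZero C B A \<and>
        cComp C (dPr2 C A B) (dIn1 C A B) = dZero C A B \<and>
        dAdd C (cComp C (dIn1 C A B) (dPr1 C A B)) (cComp C (dIn2 C A B) (dPr2 C A B))
          = cId C (dBp C A B) \<and>
        dDag C (dPr1 C A B) = dIn1 C A B \<and> dDag C (dPr2 C A B) = dIn2 C A B)"

definition tup :: "('o,'m) dacat \<Rightarrow> 'o \<Rightarrow> 'o \<Rightarrow> 'm \<Rightarrow> 'm \<Rightarrow> 'm" where
  "tup C A B f g = dAdd C (cComp C (dIn1 C A B) f) (cComp C (dIn2 C A B) g)"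

definition cotup :: "('o,'m) dacat \<Rightarrow> 'o \<Rightarrow> 'o \<Rightarrow> 'm \<Rightarrow> 'm \<Rightarrow> 'm" where
  "cotup C A B f g = dAdd C (cComp C f (dPr1 C A B)) (cComp C g (dPr2 C A B))"

definition bpmap :: "('o,'m) dacat \<Rightarrow> 'o \<Rightarrow> 'o \<Rightarrow> 'o \<Rightarrow> 'o \<Rightarrow> 'm \<Rightarrow> 'm \<Rightarrow> 'm" where
  "bpmap C A B A' B' f g =
     dAdd C (cComp C (dIn1 C A' B') (cComp C f (dPr1 C A B)))
            (cComp C (dIn2 C A' B') (cComp C g (dPr2 C A B)))"

definition dagger_positive :: "('o,'m) dacat \<Rightarrow> 'o \<Rightarrow> 'm \<Rightarrow> bool" where
  "dagger_positive C B p \<longleftrightarrow>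
     (\<exists>D\<in>cObj C. \<exists>\<phi>\<in>cHom C B D. p = cComp C (dDag C \<phi>) \<phi>)"

definition is_dagger_additive_functor ::
  "('o,'m) dacat \<Rightarrow> ('p,'n) dacat \<Rightarrow> ('o \<Rightarrow> 'p) \<Rightarrow> ('m \<Rightarrow> 'n) \<Rightarrow> bool" where
  "is_dagger_additive_functor C D Fo Fm \<longleftrightarrow>
     (\<forall>A\<in>cObj C. Fo A \<in> cObj D) \<and>
     (\<forall>A\<in>cObj C. \<forall>B\<in>cObj C. \<forall>f\<in>cHom C A B. Fm f \<in> cHom D (Fo A) (Fo B)) \<and>
     (\<forall>A\<in>cObj C. Fm (cId C A) = cId D (Fo A)) \<and>
     (\<forall>A\<in>cObj C. \<forall>B\<in>cObj C. \<forall>E\<in>cObj C. \<forall>f\<in>cHom C A B. \<forall>g\<in>cHom C B E.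
        Fm (cComp C g f) = cComp D (Fm g) (Fm f)) \<and>
     (\<forall>A\<in>cObj C. \<forall>B\<in>cObj C. \<forall>f\<in>cHom C A B. Fm (dDag C f) = dDag D (Fm f)) \<and>
     (\<forall>A\<in>cObj C. \<forall>B\<in>cObj C. \<forall>f\<in>cHom C A B. \<forall>g\<in>cHom C A B.
        Fm (dAdd C f g) = dAdd D (Fm f) (Fm g))"

record ('o,'m) mcat = "('o,'m) cat" +
  mTens  :: "'o \<Rightarrow> 'o \<Rightarrow> 'o"
  mTensM :: "'o \<Rightarrow> 'o \<Rightarrow> 'o \<Rightarrow> 'o \<Rightarrow> 'm \<Rightarrow> 'm \<Rightarrow> 'm"
     (* mTensM A B A' B' f g = f \<otimes> g : A \<otimes> B \<rightarrow> A' \<otimes> B'  for f : A \<rightarrow> A', g : B \<rightarrow> B' *)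
  mUnit  :: "'o"
  mAssoc :: "'o \<Rightarrow> 'o \<Rightarrow> 'o \<Rightarrow> 'm"  (* (A \<otimes> B) \<otimes> E \<rightarrow> A \<otimes> (B \<otimes> E) *)
  mLUnit :: "'o \<Rightarrow> 'm"
  mRUnit :: "'o \<Rightarrow> 'm"
  mSym   :: "'o \<Rightarrow> 'o \<Rightarrow> 'm"
  mCopy  :: "'o \<Rightarrow> 'm"
  mDel   :: "'o \<Rightarrow> 'm"

definition is_iso :: "('o,'m) mcat \<Rightarrow> 'o \<Rightarrow> 'o \<Rightarrow> 'm \<Rightarrow> bool" where
  "is_iso C A B f \<longleftrightarrow> f \<in> cHom C A B \<and>
     (\<exists>g\<in>cHom C B A. cComp C g f = cId C A \<and> cComp C f g = cId C B)"

definition is_markov_functor ::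
  "('o,'m) mcat \<Rightarrow> ('p,'n) mcat \<Rightarrow> ('o \<Rightarrow> 'p) \<Rightarrow> ('m \<Rightarrow> 'n) \<Rightarrow> bool" where
  "is_markov_functor C D Fo Fm \<longleftrightarrow>
     \<comment> \<open>functor\<close>
     (\<forall>A\<in>cObj C. Fo A \<in> cObj D) \<and>
     (\<forall>A\<in>cObj C. \<forall>B\<in>cObj C. \<forall>f\<in>cHom C A B. Fm f \<in> cHom D (Fo A) (Fo B)) \<and>
     (\<forall>A\<in>cObj C. Fm (cId C A) = cId D (Fo A)) \<and>
     (\<forall>A\<in>cObj C. \<forall>B\<in>cObj C. \<forall>E\<in>cObj C. \<forall>f\<in>cHom C A B. \<forall>g\<in>cHom C B E.
        Fm (cComp C g f) = cComp D (Fm g) (Fm f)) \<and>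
     (\<exists>\<phi> \<phi>0.
        \<comment> \<open>structure isomorphisms\<close>
        is_iso D (mUnit D) (Fo (mUnit C)) \<phi>0 \<and>
        (\<forall>A\<in>cObj C. \<forall>B\<in>cObj C.
           is_iso D (mTens D (Fo A) (Fo B)) (Fo (mTens C A B)) (\<phi> A B)) \<and>
        \<comment> \<open>naturality\<close>
        (\<forall>A\<in>cObj C. \<forall>B\<in>cObj C. \<forall>A'\<in>cObj C. \<forall>B'\<in>cObj C.
           \<forall>f\<in>cHom C A A'. \<forall>g\<in>cHom C B B'.
             cComp D (Fm (mTensM C A B A' B' f g)) (\<phi> A B) =
             cComp D (\<phi> A' B') (mTensM D (Fo A) (Fo B) (Fo A') (Fo B') (Fm f) (Fm g))) \<and>
        \<comment> \<open>associativity\<close>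
        (\<forall>A\<in>cObj C. \<forall>B\<in>cObj C. \<forall>E\<in>cObj C.
           cComp D (Fm (mAssoc C A B E))
             (cComp D (\<phi> (mTens C A B) E)
               (mTensM D (mTens D (Fo A) (Fo B)) (Fo E) (Fo (mTens C A B)) (Fo E)
                  (\<phi> A B) (cId D (Fo E)))) =
           cComp D (\<phi> A (mTens C B E))
             (cComp D (mTensM D (Fo A) (mTens D (Fo B) (Fo E)) (Fo A) (Fo (mTens C B E))
                         (cId D (Fo A)) (\<phi> B E))
               (mAssoc D (Fo A) (Fo B) (Fo E)))) \<and>
        \<comment> \<open>unitality\<close>
        (\<forall>A\<in>cObj C.
           cComp D (Fm (mLUnit C A))
             (cComp D (\<phi> (mUnit C) A)
               (mTensM D (mUnit D) (Fo A) (Fo (mUnit C)) (Fo A) \<phi>0 (cId D (Fo A))))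
           = mLUnit D (Fo A)) \<and>
        (\<forall>A\<in>cObj C.
           cComp D (Fm (mRUnit C A))
             (cComp D (\<phi> A (mUnit C))
               (mTensM D (Fo A) (mUnit D) (Fo A) (Fo (mUnit C)) (cId D (Fo A)) \<phi>0))
           = mRUnit D (Fo A)) \<and>
        \<comment> \<open>symmetry\<close>
        (\<forall>A\<in>cObj C. \<forall>B\<in>cObj C.
           cComp D (Fm (mSym C A B)) (\<phi> A B) = cComp D (\<phi> B A) (mSym D (Fo A) (Fo B))) \<and>
        \<comment> \<open>preservation of the comonoid structure\<close>
        (\<forall>A\<in>cObj C. Fm (mCopy C A) = cComp D (\<phi> A A) (mCopy D (Fo A))) \<and>
        (\<forall>A\<in>cObj C. Fm (mDel C A) = cComp D \<phi>0 (mDel D (Fo A))))"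

definition gauss :: "('o,'m) dacat \<Rightarrow> 'o \<Rightarrow> ('o, 'm \<times> 'm \<times> 'm) mcat" where
  "gauss C X = \<lparr>
     cObj = cObj C,
     cHom = (\<lambda>A B. {(f,p,x). f \<in> cHom C A B \<and> p \<in> cHom C B B \<and> dagger_positive C B p
                                \<and> x \<in> cHom C X B}),
     cId = (\<lambda>A. (cId C A, dZero C A A, dZero C X A)),
     cComp = (\<lambda>(g,q,y) (f,p,x).
                (cComp C g f,
                 dAdd C q (cComp C g (cComp C p (dDag C g))),
                 dAdd C y (cComp C g x))),
     mTens = dBp C,
     mTensM = (\<lambda>A B A' B' (f,p,x) (g,q,y).
                 (bpmap C A B A' B' f g, bpmap C A' B' A' B' p q, tup C A' B' x y)),
     mUnit = dZObj C,
     mAssoc = (\<lambda>A B E.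
        (tup C A (dBp C B E)
             (cComp C (dPr1 C A B) (dPr1 C (dBp C A B) E))
             (tup C B E (cComp C (dPr2 C A B) (dPr1 C (dBp C A B) E)) (dPr2 C (dBp C A B) E)),
         dZero C (dBp C A (dBp C B E)) (dBp C A (dBp C B E)),
         dZero C X (dBp C A (dBp C B E)))),
     mLUnit = (\<lambda>A. (dPr2 C (dZObj C) A, dZero C A A, dZero C X A)),
     mRUnit = (\<lambda>A. (dPr1 C A (dZObj C), dZero C A A, dZero C X A)),
     mSym = (\<lambda>A B. (tup C B A (dPr2 C A B) (dPr1 C A B),
                     dZero C (dBp C B A) (dBp C B A), dZero C X (dBp C B A))),
     mCopy = (\<lambda>A. (tup C A A (cId C A) (cId C A),
                    dZero C (dBp C A A) (dBp C A A), dZero C X (dBp C A A))),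
     mDel = (\<lambda>A. (dZero C A (dZObj C), dZero C (dZObj C) (dZObj C), dZero C X (dZObj C)))
   \<rparr>"

definition gauss_map :: "('m \<Rightarrow> 'n) \<Rightarrow> 'm \<times> 'm \<times> 'm \<Rightarrow> 'n \<times> 'n \<times> 'n" where
  "gauss_map Fm = (\<lambda>(f,p,x). (Fm f, Fm p, Fm x))"

end

theory Submission
  imports Defs
begin


definition tc :: "('o,'m) dacat \<Rightarrow> 'o \<Rightarrow> 'o \<Rightarrow> 'o \<Rightarrow> 'm \<Rightarrow> 'm \<Rightarrow> 'm" where
  "tc C A B E g f = cComp C g f"
definition ta :: "('o,'m) dacat \<Rightarrow> 'o \<Rightarrow> 'o \<Rightarrow> 'm \<Rightarrow> 'm \<Rightarrow> 'm" where
  "ta C A B f g = dAdd C f g"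
definition td :: "('o,'m) dacat \<Rightarrow> 'o \<Rightarrow> 'o \<Rightarrow> 'm \<Rightarrow> 'm" where
  "td C A B f = dDag C f"

locale DA =
  fixes C :: "('o,'m) dacat"
  assumes DA: "is_dagger_additive C"
begin

lemma cat: "is_category C" using DA unfolding is_dagger_additive_def by blast
lemma enr: "(\<forall>A\<in>cObj C. \<forall>B\<in>cObj C.
        dZero C A B \<in> cHom C A B \<and>
        (\<forall>f\<in>cHom C A B. \<forall>g\<in>cHom C A B. dAdd C f g \<in> cHom C A B \<and> dAdd C f g = dAdd C g f) \<and>
        (\<forall>f\<in>cHom C A B. \<forall>g\<in>cHom C A B. \<forall>h\<in>cHom C A B.
            dAdd C (dAdd C f g) h = dAdd C f (dAdd C g h)) \<and>
        (\<forall>f\<in>cHom C A B. dAdd C (dZero C A B) f = f) \<and>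
        (\<forall>f\<in>cHom C A B. dNeg C f \<in> cHom C A B \<and> dAdd C f (dNeg C f) = dZero C A B))"
  using DA unfolding is_dagger_additive_def by (elim conjE) assumption
lemma bil: "(\<forall>A\<in>cObj C. \<forall>B\<in>cObj C. \<forall>D\<in>cObj C.
        \<forall>f\<in>cHom C A B. \<forall>f'\<in>cHom C A B. \<forall>g\<in>cHom C B D. \<forall>g'\<in>cHom C B D.
          cComp C (dAdd C g g') f = dAdd C (cComp C g f) (cComp C g' f) \<and>
          cComp C g (dAdd C f f') = dAdd C (cComp C g f) (cComp C g f'))"
  using DA unfolding is_dagger_additive_def by (elim conjE) assumption
lemma dag: "(\<forall>A\<in>cObj C. \<forall>B\<in>cObj C. \<forall>f\<in>cHom C A B.
        dDag C f \<in> cHom C B A \<and> dDag C (dDag C f) = f) \<and>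
     (\<forall>A\<in>cObj C. dDag C (cId C A) = cId C A) \<and>
     (\<forall>A\<in>cObj C. \<forall>B\<in>cObj C. \<forall>D\<in>cObj C. \<forall>f\<in>cHom C A B. \<forall>g\<in>cHom C B D.
        dDag C (cComp C g f) = cComp C (dDag C f) (dDag C g)) \<and>
     (\<forall>A\<in>cObj C. \<forall>B\<in>cObj C. \<forall>f\<in>cHom C A B. \<forall>g\<in>cHom C A B.
        dDag C (dAdd C f g) = dAdd C (dDag C f) (dDag C g))"
  using DA unfolding is_dagger_additive_def by (elim conjE) (intro conjI; assumption)
lemma zob: "dZObj C \<in> cObj C \<and> cId C (dZObj C) = dZero C (dZObj C) (dZObj C)"
  using DA unfolding is_dagger_additive_def by (elim conjE) (intro conjI; assumption)
lemma bps: "(\<forall>A\<in>cObj C. \<forall>B\<in>cObj C.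
        dBp C A B \<in> cObj C \<and>
        dIn1 C A B \<in> cHom C A (dBp C A B) \<and> dIn2 C A B \<in> cHom C B (dBp C A B) \<and>
        dPr1 C A B \<in> cHom C (dBp C A B) A \<and> dPr2 C A B \<in> cHom C (dBp C A B) B \<and>
        cComp C (dPr1 C A B) (dIn1 C A B) = cId C A \<and>
        cComp C (dPr2 C A B) (dIn2 C A B) = cId C B \<and>
        cComp C (dPr1 C A B) (dIn2 C A B) = dZero C B A \<and>
        cComp C (dPr2 C A B) (dIn1 C A B) = dZero C A B \<and>
        dAdd C (cComp C (dIn1 C A B) (dPr1 C A B)) (cComp C (dIn2 C A B) (dPr2 C A B))
          = cId C (dBp C A B) \<and>
        dDag C (dPr1 C A B) = dIn1 C A B \<and> dDag C (dPr2 C A B) = dIn2 C A B)"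
  using DA unfolding is_dagger_additive_def by (elim conjE) assumption

lemma id_ty[simp]: "A \<in> cObj C \<Longrightarrow> cId C A \<in> cHom C A A"
  using cat unfolding is_category_def by blast
lemma tc_ty[simp]: "A \<in> cObj C \<Longrightarrow> B \<in> cObj C \<Longrightarrow> E \<in> cObj C \<Longrightarrow> f \<in> cHom C A B \<Longrightarrow> g \<in> cHom C B E
  \<Longrightarrow> tc C A B E g f \<in> cHom C A E"
  using cat unfolding is_category_def tc_def by blast
lemma tc_assoc[simp]: "A \<in> cObj C \<Longrightarrow> B \<in> cObj C \<Longrightarrow> E \<in> cObj C \<Longrightarrow> F \<in> cObj C \<Longrightarrow>
   f \<in> cHom C A B \<Longrightarrow> g \<in> cHom C B E \<Longrightarrow> h \<in> cHom C E F \<Longrightarrow>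
   tc C A B F (tc C B E F h g) f = tc C A E F h (tc C A B E g f)"
  using cat unfolding is_category_def tc_def by metis
lemma tc_id_l[simp]: "A \<in> cObj C \<Longrightarrow> B \<in> cObj C \<Longrightarrow> f \<in> cHom C A B \<Longrightarrow> tc C A B B (cId C B) f = f"
  using cat unfolding is_category_def tc_def by blast
lemma tc_id_r[simp]: "A \<in> cObj C \<Longrightarrow> B \<in> cObj C \<Longrightarrow> f \<in> cHom C A B \<Longrightarrow> tc C A A B f (cId C A) = f"
  using cat unfolding is_category_def tc_def by blast

lemma z_ty[simp]: "A \<in> cObj C \<Longrightarrow> B \<in> cObj C \<Longrightarrow> dZero C A B \<in> cHom C A B"
  using enr by blast
lemma ta_ty[simp]: "A \<in> cObj C \<Longrightarrow> B \<in> cObj C \<Longrightarrow> f \<in> cHom C A B \<Longrightarrow> g \<in> cHom C A B \<Longrightarrow> ta C A B f g \<in> cHom C A B"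
  using enr unfolding ta_def by blast
lemma ta_comm: "A \<in> cObj C \<Longrightarrow> B \<in> cObj C \<Longrightarrow> f \<in> cHom C A B \<Longrightarrow> g \<in> cHom C A B \<Longrightarrow> ta C A B f g = ta C A B g f"
  using enr unfolding ta_def by blast
lemma ta_assoc: "A \<in> cObj C \<Longrightarrow> B \<in> cObj C \<Longrightarrow> f \<in> cHom C A B \<Longrightarrow> g \<in> cHom C A B \<Longrightarrow> h \<in> cHom C A B \<Longrightarrow>
   ta C A B (ta C A B f g) h = ta C A B f (ta C A B g h)"
  using enr unfolding ta_def by blast
lemma ta_lcomm: "A \<in> cObj C \<Longrightarrow> B \<in> cObj C \<Longrightarrow> f \<in> cHom C A B \<Longrightarrow> g \<in> cHom C A B \<Longrightarrow> h \<in> cHom C A B \<Longrightarrow>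
   ta C A B f (ta C A B g h) = ta C A B g (ta C A B f h)"
  by (metis ta_assoc ta_comm)
lemma ta_z_l[simp]: "A \<in> cObj C \<Longrightarrow> B \<in> cObj C \<Longrightarrow> f \<in> cHom C A B \<Longrightarrow> ta C A B (dZero C A B) f = f"
  using enr unfolding ta_def by blast
lemma ta_z_r[simp]: "A \<in> cObj C \<Longrightarrow> B \<in> cObj C \<Longrightarrow> f \<in> cHom C A B \<Longrightarrow> ta C A B f (dZero C A B) = f"
  by (metis ta_z_l ta_comm z_ty)
lemma neg: "A \<in> cObj C \<Longrightarrow> B \<in> cObj C \<Longrightarrow> f \<in> cHom C A B \<Longrightarrow> dNeg C f \<in> cHom C A B \<and> ta C A B f (dNeg C f) = dZero C A B"
  using enr unfolding ta_def by blast
lemma cancel: assumes "A \<in> cObj C" "B \<in> cObj C" "t \<in> cHom C A B" "ta C A B t t = t"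
  shows "t = dZero C A B"
proof -
  have n: "dNeg C t \<in> cHom C A B" "ta C A B t (dNeg C t) = dZero C A B" using neg assms by auto
  have "t = ta C A B t (ta C A B t (dNeg C t))" using n assms(1-3) by simp
  also have "\<dots> = ta C A B (ta C A B t t) (dNeg C t)" using n assms(1-3) by (intro ta_assoc[symmetric]) auto
  also have "\<dots> = dZero C A B" using n assms by simp
  finally show ?thesis .
qed
lemma tc_add_l[simp]: "A \<in> cObj C \<Longrightarrow> B \<in> cObj C \<Longrightarrow> E \<in> cObj C \<Longrightarrow> f \<in> cHom C A B \<Longrightarrow> g \<in> cHom C B E \<Longrightarrow> g' \<in> cHom C B E \<Longrightarrow>
  tc C A B E (ta C B E g g') f = ta C A E (tc C A B E g f) (tc C A B E g' f)"
  using bil unfolding ta_def tc_def by blast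
lemma tc_add_r[simp]: "A \<in> cObj C \<Longrightarrow> B \<in> cObj C \<Longrightarrow> E \<in> cObj C \<Longrightarrow> f \<in> cHom C A B \<Longrightarrow> f' \<in> cHom C A B \<Longrightarrow> g \<in> cHom C B E \<Longrightarrow>
  tc C A B E g (ta C A B f f') = ta C A E (tc C A B E g f) (tc C A B E g f')"
  using bil unfolding ta_def tc_def by blast
lemma tc_z_l[simp]: assumes "A \<in> cObj C" "B \<in> cObj C" "E \<in> cObj C" "f \<in> cHom C A B"
  shows "tc C A B E (dZero C B E) f = dZero C A E"
proof -
  have "tc C A B E (dZero C B E) f = tc C A B E (ta C B E (dZero C B E) (dZero C B E)) f" using assms by simp
  thus ?thesis using assms by (intro cancel) (simp_all del: ta_z_l ta_z_r)
qed
lemma tc_z_r[simp]: assumes "A \<in> cObj C" "B \<in> cObj C" "E \<in> cObj C" "g \<in> cHom C B E"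
  shows "tc C A B E g (dZero C A B) = dZero C A E"
proof -
  have "tc C A B E g (dZero C A B) = tc C A B E g (ta C A B (dZero C A B) (dZero C A B))" using assms by simp
  thus ?thesis using assms by (intro cancel) (simp_all del: ta_z_l ta_z_r)
qed

lemma td_ty[simp]: "A \<in> cObj C \<Longrightarrow> B \<in> cObj C \<Longrightarrow> f \<in> cHom C A B \<Longrightarrow> td C A B f \<in> cHom C B A"
  using dag unfolding td_def by blast
lemma td_td[simp]: "A \<in> cObj C \<Longrightarrow> B \<in> cObj C \<Longrightarrow> f \<in> cHom C A B \<Longrightarrow> td C B A (td C A B f) = f"
  using dag unfolding td_def by blast
lemma td_id[simp]: "A \<in> cObj C \<Longrightarrow> td C A A (cId C A) = cId C A"
  using dag unfolding td_def by blast
lemma td_tc[simp]: "A \<in> cObj C \<Longrightarrow> B \<in> cObj C \<Longrightarrow> E \<in> cObj C \<Longrightarrow> f \<in> cHom C A B \<Longrightarrow> g \<in> cHom C B E \<Longrightarrow>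
  td C A E (tc C A B E g f) = tc C E B A (td C A B f) (td C B E g)"
  using dag unfolding td_def tc_def by blast
lemma td_ta[simp]: "A \<in> cObj C \<Longrightarrow> B \<in> cObj C \<Longrightarrow> f \<in> cHom C A B \<Longrightarrow> g \<in> cHom C A B \<Longrightarrow>
  td C A B (ta C A B f g) = ta C B A (td C A B f) (td C A B g)"
  using dag unfolding td_def ta_def by blast
lemma td_z[simp]: assumes "A \<in> cObj C" "B \<in> cObj C" shows "td C A B (dZero C A B) = dZero C B A"
proof -
  have "td C A B (dZero C A B) = td C A B (ta C A B (dZero C A B) (dZero C A B))" using assms by simp
  thus ?thesis using assms by (intro cancel) (simp_all del: ta_z_l ta_z_r)
qed

lemma zobj[simp]: "dZObj C \<in> cObj C" using zob by blast
lemma zobj_id: "cId C (dZObj C) = dZero C (dZObj C) (dZObj C)" using zob by blast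

lemma bp_ax: assumes "A \<in> cObj C" "B \<in> cObj C"
  shows "dBp C A B \<in> cObj C \<and>
        dIn1 C A B \<in> cHom C A (dBp C A B) \<and> dIn2 C A B \<in> cHom C B (dBp C A B) \<and>
        dPr1 C A B \<in> cHom C (dBp C A B) A \<and> dPr2 C A B \<in> cHom C (dBp C A B) B \<and>
        tc C A (dBp C A B) A (dPr1 C A B) (dIn1 C A B) = cId C A \<and>
        tc C B (dBp C A B) B (dPr2 C A B) (dIn2 C A B) = cId C B \<and>
        tc C B (dBp C A B) A (dPr1 C A B) (dIn2 C A B) = dZero C B A \<and>
        tc C A (dBp C A B) B (dPr2 C A B) (dIn1 C A B) = dZero C A B \<and>
        ta C (dBp C A B) (dBp C A B) (tc C (dBp C A B) A (dBp C A B) (dIn1 C A B) (dPr1 C A B))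
            (tc C (dBp C A B) B (dBp C A B) (dIn2 C A B) (dPr2 C A B))
          = cId C (dBp C A B) \<and>
        td C (dBp C A B) A (dPr1 C A B) = dIn1 C A B \<and> td C (dBp C A B) B (dPr2 C A B) = dIn2 C A B"
  using bps assms unfolding tc_def ta_def td_def by blast

lemma bp_ob[simp]: "A \<in> cObj C \<Longrightarrow> B \<in> cObj C \<Longrightarrow> dBp C A B \<in> cObj C" using bp_ax by blast
lemma in1_ty[simp]: "A \<in> cObj C \<Longrightarrow> B \<in> cObj C \<Longrightarrow> dIn1 C A B \<in> cHom C A (dBp C A B)" using bp_ax by blast
lemma in2_ty[simp]: "A \<in> cObj C \<Longrightarrow> B \<in> cObj C \<Longrightarrow> dIn2 C A B \<in> cHom C B (dBp C A B)" using bp_ax by blast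
lemma pr1_ty[simp]: "A \<in> cObj C \<Longrightarrow> B \<in> cObj C \<Longrightarrow> dPr1 C A B \<in> cHom C (dBp C A B) A" using bp_ax by blast
lemma pr2_ty[simp]: "A \<in> cObj C \<Longrightarrow> B \<in> cObj C \<Longrightarrow> dPr2 C A B \<in> cHom C (dBp C A B) B" using bp_ax by blast
lemma td_pr1[simp]: "A \<in> cObj C \<Longrightarrow> B \<in> cObj C \<Longrightarrow> td C (dBp C A B) A (dPr1 C A B) = dIn1 C A B" using bp_ax by blast
lemma td_pr2[simp]: "A \<in> cObj C \<Longrightarrow> B \<in> cObj C \<Longrightarrow> td C (dBp C A B) B (dPr2 C A B) = dIn2 C A B" using bp_ax by blast
lemma td_in1[simp]: "A \<in> cObj C \<Longrightarrow> B \<in> cObj C \<Longrightarrow> td C A (dBp C A B) (dIn1 C A B) = dPr1 C A B"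
  by (metis td_pr1 td_td pr1_ty bp_ob)
lemma td_in2[simp]: "A \<in> cObj C \<Longrightarrow> B \<in> cObj C \<Longrightarrow> td C B (dBp C A B) (dIn2 C A B) = dPr2 C A B"
  by (metis td_pr2 td_td pr2_ty bp_ob)
lemma p1i1[simp]: "A \<in> cObj C \<Longrightarrow> B \<in> cObj C \<Longrightarrow> tc C A (dBp C A B) A (dPr1 C A B) (dIn1 C A B) = cId C A" using bp_ax by blast
lemma p2i2[simp]: "A \<in> cObj C \<Longrightarrow> B \<in> cObj C \<Longrightarrow> tc C B (dBp C A B) B (dPr2 C A B) (dIn2 C A B) = cId C B" using bp_ax by blast
lemma p1i2[simp]: "A \<in> cObj C \<Longrightarrow> B \<in> cObj C \<Longrightarrow> tc C B (dBp C A B) A (dPr1 C A B) (dIn2 C A B) = dZero C B A" using bp_ax by blast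
lemma p2i1[simp]: "A \<in> cObj C \<Longrightarrow> B \<in> cObj C \<Longrightarrow> tc C A (dBp C A B) B (dPr2 C A B) (dIn1 C A B) = dZero C A B" using bp_ax by blast
lemma bp_id: "A \<in> cObj C \<Longrightarrow> B \<in> cObj C \<Longrightarrow> ta C (dBp C A B) (dBp C A B) (tc C (dBp C A B) A (dBp C A B) (dIn1 C A B) (dPr1 C A B))
            (tc C (dBp C A B) B (dBp C A B) (dIn2 C A B) (dPr2 C A B)) = cId C (dBp C A B)" using bp_ax by blast

lemma p1i1f[simp]: "A \<in> cObj C \<Longrightarrow> B \<in> cObj C \<Longrightarrow> Z \<in> cObj C \<Longrightarrow> f \<in> cHom C Z A \<Longrightarrow>
  tc C Z (dBp C A B) A (dPr1 C A B) (tc C Z A (dBp C A B) (dIn1 C A B) f) = f"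
  by (metis p1i1 tc_assoc tc_id_l in1_ty pr1_ty bp_ob)
lemma p2i2f[simp]: "A \<in> cObj C \<Longrightarrow> B \<in> cObj C \<Longrightarrow> Z \<in> cObj C \<Longrightarrow> f \<in> cHom C Z B \<Longrightarrow>
  tc C Z (dBp C A B) B (dPr2 C A B) (tc C Z B (dBp C A B) (dIn2 C A B) f) = f"
  by (metis p2i2 tc_assoc tc_id_l in2_ty pr2_ty bp_ob)
lemma p1i2f[simp]: "A \<in> cObj C \<Longrightarrow> B \<in> cObj C \<Longrightarrow> Z \<in> cObj C \<Longrightarrow> f \<in> cHom C Z B \<Longrightarrow>
  tc C Z (dBp C A B) A (dPr1 C A B) (tc C Z B (dBp C A B) (dIn2 C A B) f) = dZero C Z A"
  by (metis p1i2 tc_assoc tc_z_l in2_ty pr1_ty bp_ob)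
lemma p2i1f[simp]: "A \<in> cObj C \<Longrightarrow> B \<in> cObj C \<Longrightarrow> Z \<in> cObj C \<Longrightarrow> f \<in> cHom C Z A \<Longrightarrow>
  tc C Z (dBp C A B) B (dPr2 C A B) (tc C Z A (dBp C A B) (dIn1 C A B) f) = dZero C Z B"
  by (metis p2i1 tc_assoc tc_z_l in1_ty pr2_ty bp_ob)

lemma ext_into:
  assumes ob: "Q \<in> cObj C" "A \<in> cObj C" "B \<in> cObj C" "Z \<in> cObj C"
    and ty: "i1 \<in> cHom C A Q" "p1 \<in> cHom C Q A" "i2 \<in> cHom C B Q" "p2 \<in> cHom C Q B"
    and bid: "ta C Q Q (tc C Q A Q i1 p1) (tc C Q B Q i2 p2) = cId C Q"
    and fg: "f \<in> cHom C Z Q" "g \<in> cHom C Z Q"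
    and e1: "tc C Z Q A p1 f = tc C Z Q A p1 g" and e2: "tc C Z Q B p2 f = tc C Z Q B p2 g"
  shows "f = g"
proof -
  have "f = tc C Z Q Q (ta C Q Q (tc C Q A Q i1 p1) (tc C Q B Q i2 p2)) f" using bid ob fg by simp
  also have "\<dots> = ta C Z Q (tc C Z A Q i1 (tc C Z Q A p1 f)) (tc C Z B Q i2 (tc C Z Q B p2 f))"
    using ob ty fg by simp
  also have "\<dots> = ta C Z Q (tc C Z A Q i1 (tc C Z Q A p1 g)) (tc C Z B Q i2 (tc C Z Q B p2 g))"
    using e1 e2 by simp
  also have "\<dots> = tc C Z Q Q (ta C Q Q (tc C Q A Q i1 p1) (tc C Q B Q i2 p2)) g"
    using ob ty fg by simp
  also have "\<dots> = g" using bid ob fg by simp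
  finally show ?thesis .
qed

lemma ext_out:
  assumes ob: "Q \<in> cObj C" "A \<in> cObj C" "B \<in> cObj C" "Z \<in> cObj C"
    and ty: "i1 \<in> cHom C A Q" "p1 \<in> cHom C Q A" "i2 \<in> cHom C B Q" "p2 \<in> cHom C Q B"
    and bid: "ta C Q Q (tc C Q A Q i1 p1) (tc C Q B Q i2 p2) = cId C Q"
    and fg: "f \<in> cHom C Q Z" "g \<in> cHom C Q Z"
    and e1: "tc C A Q Z f i1 = tc C A Q Z g i1" and e2: "tc C B Q Z f i2 = tc C B Q Z g i2"
  shows "f = g"
proof -
  have "f = tc C Q Q Z f (ta C Q Q (tc C Q A Q i1 p1) (tc C Q B Q i2 p2))" using bid ob fg by simp
  also have "\<dots> = ta C Q Z (tc C Q A Z (tc C A Q Z f i1) p1) (tc C Q B Z (tc C B Q Z f i2) p2)"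
    using ob ty fg by simp
  also have "\<dots> = ta C Q Z (tc C Q A Z (tc C A Q Z g i1) p1) (tc C Q B Z (tc C B Q Z g i2) p2)"
    using e1 e2 by simp
  also have "\<dots> = tc C Q Q Z g (ta C Q Q (tc C Q A Q i1 p1) (tc C Q B Q i2 p2))"
    using ob ty fg by simp
  also have "\<dots> = g" using bid ob fg by simp
  finally show ?thesis .
qed

lemma ext_into_bp: "A \<in> cObj C \<Longrightarrow> B \<in> cObj C \<Longrightarrow> Z \<in> cObj C \<Longrightarrow> f \<in> cHom C Z (dBp C A B) \<Longrightarrow> g \<in> cHom C Z (dBp C A B) \<Longrightarrow>
  tc C Z (dBp C A B) A (dPr1 C A B) f = tc C Z (dBp C A B) A (dPr1 C A B) g \<Longrightarrow>
  tc C Z (dBp C A B) B (dPr2 C A B) f = tc C Z (dBp C A B) B (dPr2 C A B) g \<Longrightarrow> f = g"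
  by (rule ext_into[OF _ _ _ _ in1_ty pr1_ty in2_ty pr2_ty bp_id]) auto
lemma ext_out_bp: "A \<in> cObj C \<Longrightarrow> B \<in> cObj C \<Longrightarrow> Z \<in> cObj C \<Longrightarrow> f \<in> cHom C (dBp C A B) Z \<Longrightarrow> g \<in> cHom C (dBp C A B) Z \<Longrightarrow>
  tc C A (dBp C A B) Z f (dIn1 C A B) = tc C A (dBp C A B) Z g (dIn1 C A B) \<Longrightarrow>
  tc C B (dBp C A B) Z f (dIn2 C A B) = tc C B (dBp C A B) Z g (dIn2 C A B) \<Longrightarrow> f = g"
  by (rule ext_out[OF _ _ _ _ in1_ty pr1_ty in2_ty pr2_ty bp_id]) auto

end



locale DF = C: DA C + D: DA D for C :: "('o,'m) dacat" and D :: "('p,'n) dacat" +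
  fixes Fo :: "'o \<Rightarrow> 'p" and Fm :: "'m \<Rightarrow> 'n"
  assumes F: "is_dagger_additive_functor C D Fo Fm"
begin

lemma Fo_ob[simp]: "A \<in> cObj C \<Longrightarrow> Fo A \<in> cObj D" using F unfolding is_dagger_additive_functor_def by blast
lemma F_ty[simp]: "A \<in> cObj C \<Longrightarrow> B \<in> cObj C \<Longrightarrow> f \<in> cHom C A B \<Longrightarrow> Fm f \<in> cHom D (Fo A) (Fo B)"
  using F unfolding is_dagger_additive_functor_def by blast
lemma F_id[simp]: "A \<in> cObj C \<Longrightarrow> Fm (cId C A) = cId D (Fo A)"
  using F unfolding is_dagger_additive_functor_def by blast
lemma F_tc[simp]: "A \<in> cObj C \<Longrightarrow> B \<in> cObj C \<Longrightarrow> E \<in> cObj C \<Longrightarrow> f \<in> cHom C A B \<Longrightarrow> g \<in> cHom C B E \<Longrightarrow>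
  Fm (tc C A B E g f) = tc D (Fo A) (Fo B) (Fo E) (Fm g) (Fm f)"
  using F unfolding is_dagger_additive_functor_def tc_def by blast
lemma F_td[simp]: "A \<in> cObj C \<Longrightarrow> B \<in> cObj C \<Longrightarrow> f \<in> cHom C A B \<Longrightarrow>
  td D (Fo A) (Fo B) (Fm f) = Fm (td C A B f)"
  using F unfolding is_dagger_additive_functor_def td_def by metis
lemma F_ta[simp]: "A \<in> cObj C \<Longrightarrow> B \<in> cObj C \<Longrightarrow> f \<in> cHom C A B \<Longrightarrow> g \<in> cHom C A B \<Longrightarrow>
  Fm (ta C A B f g) = ta D (Fo A) (Fo B) (Fm f) (Fm g)"
  using F unfolding is_dagger_additive_functor_def ta_def by blast
lemma F_z[simp]: assumes "A \<in> cObj C" "B \<in> cObj C" shows "Fm (dZero C A B) = dZero D (Fo A) (Fo B)"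
proof -
  have "Fm (dZero C A B) = Fm (ta C A B (dZero C A B) (dZero C A B))" using assms by simp
  thus ?thesis using assms by (intro D.cancel) (simp_all del: C.ta_z_l C.ta_z_r D.ta_z_l D.ta_z_r)
qed
lemma FZ_id: "cId D (Fo (dZObj C)) = dZero D (Fo (dZObj C)) (Fo (dZObj C))"
  by (metis C.zobj C.zobj_id F_id F_z)

lemma Fp1i1[simp]: "A \<in> cObj C \<Longrightarrow> B \<in> cObj C \<Longrightarrow>
  tc D (Fo A) (Fo (dBp C A B)) (Fo A) (Fm (dPr1 C A B)) (Fm (dIn1 C A B)) = cId D (Fo A)"
  by (metis C.p1i1 F_tc F_id C.in1_ty C.pr1_ty C.bp_ob)
lemma Fp2i2[simp]: "A \<in> cObj C \<Longrightarrow> B \<in> cObj C \<Longrightarrow>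
  tc D (Fo B) (Fo (dBp C A B)) (Fo B) (Fm (dPr2 C A B)) (Fm (dIn2 C A B)) = cId D (Fo B)"
  by (metis C.p2i2 F_tc F_id C.in2_ty C.pr2_ty C.bp_ob)
lemma Fp1i2[simp]: "A \<in> cObj C \<Longrightarrow> B \<in> cObj C \<Longrightarrow>
  tc D (Fo B) (Fo (dBp C A B)) (Fo A) (Fm (dPr1 C A B)) (Fm (dIn2 C A B)) = dZero D (Fo B) (Fo A)"
  by (metis C.p1i2 F_tc F_z C.in2_ty C.pr1_ty C.bp_ob)
lemma Fp2i1[simp]: "A \<in> cObj C \<Longrightarrow> B \<in> cObj C \<Longrightarrow>
  tc D (Fo A) (Fo (dBp C A B)) (Fo B) (Fm (dPr2 C A B)) (Fm (dIn1 C A B)) = dZero D (Fo A) (Fo B)"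
  by (metis C.p2i1 F_tc F_z C.in1_ty C.pr2_ty C.bp_ob)

lemma Fp1i1f[simp]: "A \<in> cObj C \<Longrightarrow> B \<in> cObj C \<Longrightarrow> Z \<in> cObj D \<Longrightarrow> f \<in> cHom D Z (Fo A) \<Longrightarrow>
  tc D Z (Fo (dBp C A B)) (Fo A) (Fm (dPr1 C A B)) (tc D Z (Fo A) (Fo (dBp C A B)) (Fm (dIn1 C A B)) f) = f"
  by (metis Fp1i1 D.tc_assoc D.tc_id_l F_ty C.in1_ty C.pr1_ty C.bp_ob Fo_ob)
lemma Fp2i2f[simp]: "A \<in> cObj C \<Longrightarrow> B \<in> cObj C \<Longrightarrow> Z \<in> cObj D \<Longrightarrow> f \<in> cHom D Z (Fo B) \<Longrightarrow>
  tc D Z (Fo (dBp C A B)) (Fo B) (Fm (dPr2 C A B)) (tc D Z (Fo B) (Fo (dBp C A B)) (Fm (dIn2 C A B)) f) = f"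
  by (metis Fp2i2 D.tc_assoc D.tc_id_l F_ty C.in2_ty C.pr2_ty C.bp_ob Fo_ob)
lemma Fp1i2f[simp]: "A \<in> cObj C \<Longrightarrow> B \<in> cObj C \<Longrightarrow> Z \<in> cObj D \<Longrightarrow> f \<in> cHom D Z (Fo B) \<Longrightarrow>
  tc D Z (Fo (dBp C A B)) (Fo A) (Fm (dPr1 C A B)) (tc D Z (Fo B) (Fo (dBp C A B)) (Fm (dIn2 C A B)) f) = dZero D Z (Fo A)"
  by (metis Fp1i2 D.tc_assoc D.tc_z_l F_ty C.in2_ty C.pr1_ty C.bp_ob Fo_ob)
lemma Fp2i1f[simp]: "A \<in> cObj C \<Longrightarrow> B \<in> cObj C \<Longrightarrow> Z \<in> cObj D \<Longrightarrow> f \<in> cHom D Z (Fo A) \<Longrightarrow>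
  tc D Z (Fo (dBp C A B)) (Fo B) (Fm (dPr2 C A B)) (tc D Z (Fo A) (Fo (dBp C A B)) (Fm (dIn1 C A B)) f) = dZero D Z (Fo B)"
  by (metis Fp2i1 D.tc_assoc D.tc_z_l F_ty C.in1_ty C.pr2_ty C.bp_ob Fo_ob)

lemma Fbp_id: assumes "A \<in> cObj C" "B \<in> cObj C" shows
  "ta D (Fo (dBp C A B)) (Fo (dBp C A B))
     (tc D (Fo (dBp C A B)) (Fo A) (Fo (dBp C A B)) (Fm (dIn1 C A B)) (Fm (dPr1 C A B)))
     (tc D (Fo (dBp C A B)) (Fo B) (Fo (dBp C A B)) (Fm (dIn2 C A B)) (Fm (dPr2 C A B)))
   = cId D (Fo (dBp C A B))"
proof -
  have "Fm (ta C (dBp C A B) (dBp C A B) (tc C (dBp C A B) A (dBp C A B) (dIn1 C A B) (dPr1 C A B))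
            (tc C (dBp C A B) B (dBp C A B) (dIn2 C A B) (dPr2 C A B))) = Fm (cId C (dBp C A B))"
    using C.bp_id assms by simp
  thus ?thesis using assms by simp
qed

lemma ext_into_F: "A \<in> cObj C \<Longrightarrow> B \<in> cObj C \<Longrightarrow> Z \<in> cObj D \<Longrightarrow>
  f \<in> cHom D Z (Fo (dBp C A B)) \<Longrightarrow> g \<in> cHom D Z (Fo (dBp C A B)) \<Longrightarrow>
  tc D Z (Fo (dBp C A B)) (Fo A) (Fm (dPr1 C A B)) f = tc D Z (Fo (dBp C A B)) (Fo A) (Fm (dPr1 C A B)) g \<Longrightarrow>
  tc D Z (Fo (dBp C A B)) (Fo B) (Fm (dPr2 C A B)) f = tc D Z (Fo (dBp C A B)) (Fo B) (Fm (dPr2 C A B)) g \<Longrightarrow> f = g"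
  by (rule D.ext_into[OF _ _ _ _ _ _ _ _ Fbp_id]) auto
lemma ext_out_F: "A \<in> cObj C \<Longrightarrow> B \<in> cObj C \<Longrightarrow> Z \<in> cObj D \<Longrightarrow>
  f \<in> cHom D (Fo (dBp C A B)) Z \<Longrightarrow> g \<in> cHom D (Fo (dBp C A B)) Z \<Longrightarrow>
  tc D (Fo A) (Fo (dBp C A B)) Z f (Fm (dIn1 C A B)) = tc D (Fo A) (Fo (dBp C A B)) Z g (Fm (dIn1 C A B)) \<Longrightarrow>
  tc D (Fo B) (Fo (dBp C A B)) Z f (Fm (dIn2 C A B)) = tc D (Fo B) (Fo (dBp C A B)) Z g (Fm (dIn2 C A B)) \<Longrightarrow> f = g"
  by (rule D.ext_out[OF _ _ _ _ _ _ _ _ Fbp_id]) auto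

end



lemma bpmap_t: "bpmap C A B A' B' f g = ta C (dBp C A B) (dBp C A' B')
   (tc C (dBp C A B) A' (dBp C A' B') (dIn1 C A' B') (tc C (dBp C A B) A A' f (dPr1 C A B)))
   (tc C (dBp C A B) B' (dBp C A' B') (dIn2 C A' B') (tc C (dBp C A B) B B' g (dPr2 C A B)))"
  unfolding bpmap_def ta_def tc_def by simp
lemma tup_t: "tup C A B f g = ta C Z (dBp C A B) (tc C Z A (dBp C A B) (dIn1 C A B) f) (tc C Z B (dBp C A B) (dIn2 C A B) g)"
  unfolding tup_def ta_def tc_def by simp

context DF begin

definition phi where "phi A B = ta D (dBp D (Fo A) (Fo B)) (Fo (dBp C A B))
   (tc D (dBp D (Fo A) (Fo B)) (Fo A) (Fo (dBp C A B)) (Fm (dIn1 C A B)) (dPr1 D (Fo A) (Fo B)))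
   (tc D (dBp D (Fo A) (Fo B)) (Fo B) (Fo (dBp C A B)) (Fm (dIn2 C A B)) (dPr2 D (Fo A) (Fo B)))"
definition psi where "psi A B = ta D (Fo (dBp C A B)) (dBp D (Fo A) (Fo B))
   (tc D (Fo (dBp C A B)) (Fo A) (dBp D (Fo A) (Fo B)) (dIn1 D (Fo A) (Fo B)) (Fm (dPr1 C A B)))
   (tc D (Fo (dBp C A B)) (Fo B) (dBp D (Fo A) (Fo B)) (dIn2 D (Fo A) (Fo B)) (Fm (dPr2 C A B)))"

lemma phi_ty[simp]: "A \<in> cObj C \<Longrightarrow> B \<in> cObj C \<Longrightarrow> phi A B \<in> cHom D (dBp D (Fo A) (Fo B)) (Fo (dBp C A B))"
  unfolding phi_def by simp
lemma psi_ty[simp]: "A \<in> cObj C \<Longrightarrow> B \<in> cObj C \<Longrightarrow> psi A B \<in> cHom D (Fo (dBp C A B)) (dBp D (Fo A) (Fo B))"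
  unfolding psi_def by simp

lemma psiphi: "A \<in> cObj C \<Longrightarrow> B \<in> cObj C \<Longrightarrow>
  tc D (dBp D (Fo A) (Fo B)) (Fo (dBp C A B)) (dBp D (Fo A) (Fo B)) (psi A B) (phi A B) = cId D (dBp D (Fo A) (Fo B))"
  by (rule D.ext_into_bp[of "Fo A" "Fo B" "dBp D (Fo A) (Fo B)"]) (simp_all add: phi_def psi_def)
lemma phipsi: "A \<in> cObj C \<Longrightarrow> B \<in> cObj C \<Longrightarrow>
  tc D (Fo (dBp C A B)) (dBp D (Fo A) (Fo B)) (Fo (dBp C A B)) (phi A B) (psi A B) = cId D (Fo (dBp C A B))"
  by (rule ext_into_F[of A B "Fo (dBp C A B)"]) (simp_all add: phi_def psi_def)

lemma nat1: assumes "A \<in> cObj C" "B \<in> cObj C" "A' \<in> cObj C" "B' \<in> cObj C" "f \<in> cHom C A A'" "g \<in> cHom C B B'"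
  shows "tc D (dBp D (Fo A) (Fo B)) (Fo (dBp C A B)) (Fo (dBp C A' B')) (Fm (bpmap C A B A' B' f g)) (phi A B)
   = tc D (dBp D (Fo A) (Fo B)) (dBp D (Fo A') (Fo B')) (Fo (dBp C A' B')) (phi A' B') (bpmap D (Fo A) (Fo B) (Fo A') (Fo B') (Fm f) (Fm g))"
  using assms
  apply (rule_tac D.ext_out_bp[of "Fo A" "Fo B" "Fo (dBp C A' B')"])
  apply (simp_all add: phi_def bpmap_t)
  done
end



lemma gauss_obj[simp]: "cObj (gauss C X) = cObj C" by (simp add: gauss_def)
lemma gauss_hom: "((f,p,x) \<in> cHom (gauss C X) A B) = (f \<in> cHom C A B \<and> p \<in> cHom C B B \<and> dagger_positive C B p \<and> x \<in> cHom C X B)"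
  by (simp add: gauss_def)
lemma gauss_id[simp]: "cId (gauss C X) A = (cId C A, dZero C A A, dZero C X A)" by (simp add: gauss_def)
lemma gauss_unit[simp]: "mUnit (gauss C X) = dZObj C" by (simp add: gauss_def)
lemma gauss_tens[simp]: "mTens (gauss C X) = dBp C" by (simp add: gauss_def)
lemma gauss_tensM[simp]: "mTensM (gauss C X) A B A' B' (f,p,x) (g,q,y) =
   (bpmap C A B A' B' f g, bpmap C A' B' A' B' p q,
    ta C X (dBp C A' B') (tc C X A' (dBp C A' B') (dIn1 C A' B') x) (tc C X B' (dBp C A' B') (dIn2 C A' B') y))"
  by (simp add: gauss_def tup_t)
lemma gauss_assoc[simp]: "mAssoc (gauss C X) A B E =
  (ta C (dBp C (dBp C A B) E) (dBp C A (dBp C B E))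
     (tc C (dBp C (dBp C A B) E) A (dBp C A (dBp C B E)) (dIn1 C A (dBp C B E))
        (tc C (dBp C (dBp C A B) E) (dBp C A B) A (dPr1 C A B) (dPr1 C (dBp C A B) E)))
     (tc C (dBp C (dBp C A B) E) (dBp C B E) (dBp C A (dBp C B E)) (dIn2 C A (dBp C B E))
        (ta C (dBp C (dBp C A B) E) (dBp C B E)
          (tc C (dBp C (dBp C A B) E) B (dBp C B E) (dIn1 C B E)
             (tc C (dBp C (dBp C A B) E) (dBp C A B) B (dPr2 C A B) (dPr1 C (dBp C A B) E)))
          (tc C (dBp C (dBp C A B) E) E (dBp C B E) (dIn2 C B E) (dPr2 C (dBp C A B) E)))),
   dZero C (dBp C A (dBp C B E)) (dBp C A (dBp C B E)), dZero C X (dBp C A (dBp C B E)))"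
  by (simp add: gauss_def tup_def tc_def ta_def)
lemma gauss_lu[simp]: "mLUnit (gauss C X) A = (dPr2 C (dZObj C) A, dZero C A A, dZero C X A)" by (simp add: gauss_def)
lemma gauss_ru[simp]: "mRUnit (gauss C X) A = (dPr1 C A (dZObj C), dZero C A A, dZero C X A)" by (simp add: gauss_def)
lemma gauss_sym[simp]: "mSym (gauss C X) A B = (ta C (dBp C A B) (dBp C B A)
     (tc C (dBp C A B) B (dBp C B A) (dIn1 C B A) (dPr2 C A B))
     (tc C (dBp C A B) A (dBp C B A) (dIn2 C B A) (dPr1 C A B)),
   dZero C (dBp C B A) (dBp C B A), dZero C X (dBp C B A))" by (simp add: gauss_def tup_def tc_def ta_def)
lemma gauss_copy[simp]: "mCopy (gauss C X) A = (ta C A (dBp C A A)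
     (tc C A A (dBp C A A) (dIn1 C A A) (cId C A)) (tc C A A (dBp C A A) (dIn2 C A A) (cId C A)),
   dZero C (dBp C A A) (dBp C A A), dZero C X (dBp C A A))" by (simp add: gauss_def tup_def tc_def ta_def)
lemma gauss_del[simp]: "mDel (gauss C X) A = (dZero C A (dZObj C), dZero C (dZObj C) (dZObj C), dZero C X (dZObj C))"
  by (simp add: gauss_def)
lemma gauss_map_simp[simp]: "gauss_map Fm (f,p,x) = (Fm f, Fm p, Fm x)" by (simp add: gauss_map_def)
lemma gcomp_t: "cComp (gauss C X) (g,q,y) (f,p,x) =
  (tc C A B E g f, ta C E E q (tc C E B E g (tc C E B B p (td C B E g))), ta C X E y (tc C X B E g x))"
  by (simp add: gauss_def tc_def ta_def td_def)

context DA begin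
lemma dp_z[simp]: "B \<in> cObj C \<Longrightarrow> dagger_positive C B (dZero C B B)"
proof -
  assume B: "B \<in> cObj C"
  have "tc C B B B (td C B B (dZero C B B)) (dZero C B B) = dZero C B B" using B by simp
  thus ?thesis unfolding dagger_positive_def tc_def td_def using B
    by (intro bexI[of _ B] bexI[of _ "dZero C B B"]) auto
qed
end

context DF begin
lemma dp_F: assumes "B \<in> cObj C" "dagger_positive C B p" shows "dagger_positive D (Fo B) (Fm p)"
proof -
  obtain E \<phi> where E: "E \<in> cObj C" "\<phi> \<in> cHom C B E" "p = tc C B E B (td C B E \<phi>) \<phi>"
    using assms(2) unfolding dagger_positive_def tc_def td_def by blast
  have "Fm p = tc D (Fo B) (Fo E) (Fo B) (td D (Fo B) (Fo E) (Fm \<phi>)) (Fm \<phi>)" using E assms(1) by simp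
  thus ?thesis unfolding dagger_positive_def using E assms(1)
    by (intro bexI[of _ "Fo E"] bexI[of _ "Fm \<phi>"]) (auto simp: tc_def td_def)
qed
end



context DF begin

lemma m_hom: assumes X: "X \<in> cObj C" shows "\<forall>A\<in>cObj (gauss C X). \<forall>B\<in>cObj (gauss C X). \<forall>f\<in>cHom (gauss C X) A B.
   gauss_map Fm f \<in> cHom (gauss D (Fo X)) (Fo A) (Fo B)"
proof (intro ballI)
  fix A B f assume A: "A \<in> cObj (gauss C X)" and B: "B \<in> cObj (gauss C X)" and f: "f \<in> cHom (gauss C X) A B"
  obtain f1 p x where fe: "f = (f1,p,x)" by (cases f)
  show "gauss_map Fm f \<in> cHom (gauss D (Fo X)) (Fo A) (Fo B)"
    using A B f X unfolding fe by (simp add: gauss_hom dp_F)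
qed

lemma m_id: assumes X: "X \<in> cObj C" shows "\<forall>A\<in>cObj (gauss C X). gauss_map Fm (cId (gauss C X) A) = cId (gauss D (Fo X)) (Fo A)"
  using X by simp

lemma m_comp: assumes X: "X \<in> cObj C" shows "\<forall>A\<in>cObj (gauss C X). \<forall>B\<in>cObj (gauss C X). \<forall>E\<in>cObj (gauss C X).
  \<forall>f\<in>cHom (gauss C X) A B. \<forall>g\<in>cHom (gauss C X) B E.
   gauss_map Fm (cComp (gauss C X) g f) = cComp (gauss D (Fo X)) (gauss_map Fm g) (gauss_map Fm f)"
proof (intro ballI)
  fix A B E f g assume A: "A \<in> cObj (gauss C X)" and B: "B \<in> cObj (gauss C X)" and E: "E \<in> cObj (gauss C X)"
    and f: "f \<in> cHom (gauss C X) A B" and g: "g \<in> cHom (gauss C X) B E"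
  obtain f1 p x where fe: "f = (f1,p,x)" by (cases f)
  obtain g1 q y where ge: "g = (g1,q,y)" by (cases g)
  show "gauss_map Fm (cComp (gauss C X) g f) = cComp (gauss D (Fo X)) (gauss_map Fm g) (gauss_map Fm f)"
    using A B E f g X unfolding fe ge
    by (simp add: gauss_hom gcomp_t[where C=C and A=A and B=B and E=E] gcomp_t[where C=D and A="Fo A" and B="Fo B" and E="Fo E"])
qed

lemma m_iso0: assumes X: "X \<in> cObj C" shows
  "is_iso (gauss D (Fo X)) (mUnit (gauss D (Fo X))) (Fo (mUnit (gauss C X)))
     (dZero D (dZObj D) (Fo (dZObj C)), dZero D (Fo (dZObj C)) (Fo (dZObj C)), dZero D (Fo X) (Fo (dZObj C)))"
  unfolding is_iso_def using X
  apply (simp add: gauss_hom)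
  apply (rule bexI[of _ "(dZero D (Fo (dZObj C)) (dZObj D), dZero D (dZObj D) (dZObj D), dZero D (Fo X) (dZObj D))"])
   apply (simp add: gcomp_t[where C=D and A="dZObj D" and B="Fo (dZObj C)" and E="dZObj D" and g="dZero D (Fo (dZObj C)) (dZObj D)"]
      gcomp_t[where C=D and B="dZObj D" and A="Fo (dZObj C)" and E="Fo (dZObj C)" and g="dZero D (dZObj D) (Fo (dZObj C))"] D.zobj_id FZ_id)
  apply (simp add: gauss_hom)
  done

lemma m_iso: assumes X: "X \<in> cObj C" shows
  "\<forall>A\<in>cObj (gauss C X). \<forall>B\<in>cObj (gauss C X). is_iso (gauss D (Fo X)) (mTens (gauss D (Fo X)) (Fo A) (Fo B)) (Fo (mTens (gauss C X) A B))
     (phi A B, dZero D (Fo (dBp C A B)) (Fo (dBp C A B)), dZero D (Fo X) (Fo (dBp C A B)))"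
proof (intro ballI)
  fix A B assume A: "A \<in> cObj (gauss C X)" and B: "B \<in> cObj (gauss C X)"
  show "is_iso (gauss D (Fo X)) (mTens (gauss D (Fo X)) (Fo A) (Fo B)) (Fo (mTens (gauss C X) A B))
     (phi A B, dZero D (Fo (dBp C A B)) (Fo (dBp C A B)), dZero D (Fo X) (Fo (dBp C A B)))"
  unfolding is_iso_def using X A B
  apply (simp add: gauss_hom)
  apply (rule bexI[of _ "(psi A B, dZero D (dBp D (Fo A) (Fo B)) (dBp D (Fo A) (Fo B)), dZero D (Fo X) (dBp D (Fo A) (Fo B)))"])
   apply (simp add: gcomp_t[where C=D and A="dBp D (Fo A) (Fo B)" and B="Fo (dBp C A B)" and E="dBp D (Fo A) (Fo B)" and g="psi A B"]
      gcomp_t[where C=D and B="dBp D (Fo A) (Fo B)" and A="Fo (dBp C A B)" and E="Fo (dBp C A B)" and g="phi A B"] psiphi phipsi)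
  apply (simp add: gauss_hom)
  done
qed

end


context DF begin

lemma m_nat: assumes X: "X \<in> cObj C" shows
 "\<forall>A\<in>cObj (gauss C X). \<forall>B\<in>cObj (gauss C X). \<forall>A'\<in>cObj (gauss C X). \<forall>B'\<in>cObj (gauss C X).
   \<forall>f\<in>cHom (gauss C X) A A'. \<forall>g\<in>cHom (gauss C X) B B'.
     cComp (gauss D (Fo X)) (gauss_map Fm (mTensM (gauss C X) A B A' B' f g))
       (phi A B, dZero D (Fo (dBp C A B)) (Fo (dBp C A B)), dZero D (Fo X) (Fo (dBp C A B))) =
     cComp (gauss D (Fo X)) (phi A' B', dZero D (Fo (dBp C A' B')) (Fo (dBp C A' B')), dZero D (Fo X) (Fo (dBp C A' B')))
       (mTensM (gauss D (Fo X)) (Fo A) (Fo B) (Fo A') (Fo B') (gauss_map Fm f) (gauss_map Fm g))"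
proof (intro ballI)
  fix A B A' B' f g assume A: "A \<in> cObj (gauss C X)" and B: "B \<in> cObj (gauss C X)"
    and A': "A' \<in> cObj (gauss C X)" and B': "B' \<in> cObj (gauss C X)"
    and f: "f \<in> cHom (gauss C X) A A'" and g: "g \<in> cHom (gauss C X) B B'"
  obtain f1 p x where fe: "f = (f1,p,x)" by (cases f)
  obtain g1 q y where ge: "g = (g1,q,y)" by (cases g)
  show "cComp (gauss D (Fo X)) (gauss_map Fm (mTensM (gauss C X) A B A' B' f g))
       (phi A B, dZero D (Fo (dBp C A B)) (Fo (dBp C A B)), dZero D (Fo X) (Fo (dBp C A B))) =
     cComp (gauss D (Fo X)) (phi A' B', dZero D (Fo (dBp C A' B')) (Fo (dBp C A' B')), dZero D (Fo X) (Fo (dBp C A' B')))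
       (mTensM (gauss D (Fo X)) (Fo A) (Fo B) (Fo A') (Fo B') (gauss_map Fm f) (gauss_map Fm g))"
    using A B A' B' f g X unfolding fe ge
    apply (simp add: gauss_hom gcomp_t[where C=D and A="dBp D (Fo A) (Fo B)" and B="Fo (dBp C A B)" and E="Fo (dBp C A' B')"
        and g="Fm (bpmap C A B A' B' f1 g1)"]
       gcomp_t[where C=D and A="dBp D (Fo A) (Fo B)" and B="dBp D (Fo A') (Fo B')" and E="Fo (dBp C A' B')" and g="phi A' B'"])
    apply (simp add: phi_def bpmap_t)
    done
qed

end


context DF begin

lemma m_assoc: assumes X: "X \<in> cObj C" shows
 "\<forall>A\<in>cObj (gauss C X). \<forall>B\<in>cObj (gauss C X). \<forall>E\<in>cObj (gauss C X).
           cComp (gauss D (Fo X)) (gauss_map Fm (mAssoc (gauss C X) A B E))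
             (cComp (gauss D (Fo X)) (phi (mTens (gauss C X) A B) E, dZero D (Fo (dBp C (mTens (gauss C X) A B) E)) (Fo (dBp C (mTens (gauss C X) A B) E)), dZero D (Fo X) (Fo (dBp C (mTens (gauss C X) A B) E)))
               (mTensM (gauss D (Fo X)) (mTens (gauss D (Fo X)) (Fo A) (Fo B)) (Fo E) (Fo (mTens (gauss C X) A B)) (Fo E)
                  (phi A B, dZero D (Fo (dBp C A B)) (Fo (dBp C A B)), dZero D (Fo X) (Fo (dBp C A B))) (cId (gauss D (Fo X)) (Fo E)))) =
           cComp (gauss D (Fo X)) (phi A (mTens (gauss C X) B E), dZero D (Fo (dBp C A (mTens (gauss C X) B E))) (Fo (dBp C A (mTens (gauss C X) B E))), dZero D (Fo X) (Fo (dBp C A (mTens (gauss C X) B E))))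
             (cComp (gauss D (Fo X)) (mTensM (gauss D (Fo X)) (Fo A) (mTens (gauss D (Fo X)) (Fo B) (Fo E)) (Fo A) (Fo (mTens (gauss C X) B E))
                         (cId (gauss D (Fo X)) (Fo A)) (phi B E, dZero D (Fo (dBp C B E)) (Fo (dBp C B E)), dZero D (Fo X) (Fo (dBp C B E))))
               (mAssoc (gauss D (Fo X)) (Fo A) (Fo B) (Fo E)))"
proof (intro ballI)
  fix A B E assume A: "A \<in> cObj (gauss C X)" and B: "B \<in> cObj (gauss C X)" and E: "E \<in> cObj (gauss C X)"
  let ?FA = "Fo A" and ?FB = "Fo B" and ?FE = "Fo E"
  show "cComp (gauss D (Fo X)) (gauss_map Fm (mAssoc (gauss C X) A B E))
             (cComp (gauss D (Fo X)) (phi (mTens (gauss C X) A B) E, dZero D (Fo (dBp C (mTens (gauss C X) A B) E)) (Fo (dBp C (mTens (gauss C X) A B) E)), dZero D (Fo X) (Fo (dBp C (mTens (gauss C X) A B) E)))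
               (mTensM (gauss D (Fo X)) (mTens (gauss D (Fo X)) (Fo A) (Fo B)) (Fo E) (Fo (mTens (gauss C X) A B)) (Fo E)
                  (phi A B, dZero D (Fo (dBp C A B)) (Fo (dBp C A B)), dZero D (Fo X) (Fo (dBp C A B))) (cId (gauss D (Fo X)) (Fo E)))) =
           cComp (gauss D (Fo X)) (phi A (mTens (gauss C X) B E), dZero D (Fo (dBp C A (mTens (gauss C X) B E))) (Fo (dBp C A (mTens (gauss C X) B E))), dZero D (Fo X) (Fo (dBp C A (mTens (gauss C X) B E))))
             (cComp (gauss D (Fo X)) (mTensM (gauss D (Fo X)) (Fo A) (mTens (gauss D (Fo X)) (Fo B) (Fo E)) (Fo A) (Fo (mTens (gauss C X) B E))
                         (cId (gauss D (Fo X)) (Fo A)) (phi B E, dZero D (Fo (dBp C B E)) (Fo (dBp C B E)), dZero D (Fo X) (Fo (dBp C B E))))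
               (mAssoc (gauss D (Fo X)) (Fo A) (Fo B) (Fo E)))"
    using A B E X
    apply (simp only: gauss_tens gauss_tensM gauss_id gauss_map_simp gauss_assoc gauss_obj
       gcomp_t[where C=D and A="dBp D (dBp D ?FA ?FB) ?FE" and B="dBp D (Fo (dBp C A B)) ?FE" and E="Fo (dBp C (dBp C A B) E)"
          and g="phi (dBp C A B) E"]
       gcomp_t[where C=D and A="dBp D (dBp D ?FA ?FB) ?FE" and B="dBp D ?FA (dBp D ?FB ?FE)" and E="dBp D ?FA (Fo (dBp C B E))"
          and g="bpmap D ?FA (dBp D ?FB ?FE) ?FA (Fo (dBp C B E)) (cId D ?FA) (phi B E)"])
    apply (simp only: 
       gcomp_t[where C=D and A="dBp D (dBp D ?FA ?FB) ?FE" and B="Fo (dBp C (dBp C A B) E)" and E="Fo (dBp C A (dBp C B E))"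
          and q="Fm (dZero C (dBp C A (dBp C B E)) (dBp C A (dBp C B E)))"]
       gcomp_t[where C=D and A="dBp D (dBp D ?FA ?FB) ?FE" and B="dBp D ?FA (Fo (dBp C B E))" and E="Fo (dBp C A (dBp C B E))"
          and g="phi A (dBp C B E)"])
    apply (simp add: phi_def bpmap_t D.ta_assoc)
    done
qed

end


context DF begin

lemma m_lu: assumes X: "X \<in> cObj C" shows
 "\<forall>A\<in>cObj (gauss C X).
           cComp (gauss D (Fo X)) (gauss_map Fm (mLUnit (gauss C X) A))
             (cComp (gauss D (Fo X)) (phi (mUnit (gauss C X)) A, dZero D (Fo (dBp C (mUnit (gauss C X)) A)) (Fo (dBp C (mUnit (gauss C X)) A)), dZero D (Fo X) (Fo (dBp C (mUnit (gauss C X)) A)))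
               (mTensM (gauss D (Fo X)) (mUnit (gauss D (Fo X))) (Fo A) (Fo (mUnit (gauss C X))) (Fo A)
                 (dZero D (dZObj D) (Fo (dZObj C)), dZero D (Fo (dZObj C)) (Fo (dZObj C)), dZero D (Fo X) (Fo (dZObj C))) (cId (gauss D (Fo X)) (Fo A))))
           = mLUnit (gauss D (Fo X)) (Fo A)"
proof (intro ballI)
  fix A assume A: "A \<in> cObj (gauss C X)"
  let ?FA = "Fo A" and ?FZ = "Fo (dZObj C)" and ?Z = "dZObj D"
  show "cComp (gauss D (Fo X)) (gauss_map Fm (mLUnit (gauss C X) A))
             (cComp (gauss D (Fo X)) (phi (mUnit (gauss C X)) A, dZero D (Fo (dBp C (mUnit (gauss C X)) A)) (Fo (dBp C (mUnit (gauss C X)) A)), dZero D (Fo X) (Fo (dBp C (mUnit (gauss C X)) A)))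
               (mTensM (gauss D (Fo X)) (mUnit (gauss D (Fo X))) (Fo A) (Fo (mUnit (gauss C X))) (Fo A)
                 (dZero D (dZObj D) (Fo (dZObj C)), dZero D (Fo (dZObj C)) (Fo (dZObj C)), dZero D (Fo X) (Fo (dZObj C))) (cId (gauss D (Fo X)) (Fo A))))
           = mLUnit (gauss D (Fo X)) (Fo A)"
    using A X
    apply (simp only: gauss_tens gauss_tensM gauss_id gauss_map_simp gauss_lu gauss_unit gauss_obj
       gcomp_t[where C=D and A="dBp D ?Z ?FA" and B="dBp D ?FZ ?FA" and E="Fo (dBp C (dZObj C) A)"
          and g="phi (dZObj C) A"])
    apply (simp only:
       gcomp_t[where C=D and A="dBp D ?Z ?FA" and B="Fo (dBp C (dZObj C) A)" and E="?FA"
          and g="Fm (dPr2 C (dZObj C) A)"])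
    apply (simp add: phi_def bpmap_t D.ta_assoc)
    done
qed

lemma m_ru: assumes X: "X \<in> cObj C" shows
 "\<forall>A\<in>cObj (gauss C X).
           cComp (gauss D (Fo X)) (gauss_map Fm (mRUnit (gauss C X) A))
             (cComp (gauss D (Fo X)) (phi A (mUnit (gauss C X)), dZero D (Fo (dBp C A (mUnit (gauss C X)))) (Fo (dBp C A (mUnit (gauss C X)))), dZero D (Fo X) (Fo (dBp C A (mUnit (gauss C X)))))
               (mTensM (gauss D (Fo X)) (Fo A) (mUnit (gauss D (Fo X))) (Fo A) (Fo (mUnit (gauss C X))) (cId (gauss D (Fo X)) (Fo A))
                 (dZero D (dZObj D) (Fo (dZObj C)), dZero D (Fo (dZObj C)) (Fo (dZObj C)), dZero D (Fo X) (Fo (dZObj C)))))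
           = mRUnit (gauss D (Fo X)) (Fo A)"
proof (intro ballI)
  fix A assume A: "A \<in> cObj (gauss C X)"
  let ?FA = "Fo A" and ?FZ = "Fo (dZObj C)" and ?Z = "dZObj D"
  show "cComp (gauss D (Fo X)) (gauss_map Fm (mRUnit (gauss C X) A))
             (cComp (gauss D (Fo X)) (phi A (mUnit (gauss C X)), dZero D (Fo (dBp C A (mUnit (gauss C X)))) (Fo (dBp C A (mUnit (gauss C X)))), dZero D (Fo X) (Fo (dBp C A (mUnit (gauss C X)))))
               (mTensM (gauss D (Fo X)) (Fo A) (mUnit (gauss D (Fo X))) (Fo A) (Fo (mUnit (gauss C X))) (cId (gauss D (Fo X)) (Fo A))
                 (dZero D (dZObj D) (Fo (dZObj C)), dZero D (Fo (dZObj C)) (Fo (dZObj C)), dZero D (Fo X) (Fo (dZObj C)))))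
           = mRUnit (gauss D (Fo X)) (Fo A)"
    using A X
    apply (simp only: gauss_tens gauss_tensM gauss_id gauss_map_simp gauss_ru gauss_unit gauss_obj
       gcomp_t[where C=D and A="dBp D ?FA ?Z" and B="dBp D ?FA ?FZ" and E="Fo (dBp C A (dZObj C))"
          and g="phi A (dZObj C)"])
    apply (simp only:
       gcomp_t[where C=D and A="dBp D ?FA ?Z" and B="Fo (dBp C A (dZObj C))" and E="?FA"
          and g="Fm (dPr1 C A (dZObj C))"])
    apply (simp add: phi_def bpmap_t D.ta_assoc)
    done
qed

lemma m_sym: assumes X: "X \<in> cObj C" shows
 "\<forall>A\<in>cObj (gauss C X). \<forall>B\<in>cObj (gauss C X).
    cComp (gauss D (Fo X)) (gauss_map Fm (mSym (gauss C X) A B))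
      (phi A B, dZero D (Fo (dBp C A B)) (Fo (dBp C A B)), dZero D (Fo X) (Fo (dBp C A B)))
  = cComp (gauss D (Fo X)) (phi B A, dZero D (Fo (dBp C B A)) (Fo (dBp C B A)), dZero D (Fo X) (Fo (dBp C B A)))
      (mSym (gauss D (Fo X)) (Fo A) (Fo B))"
proof (intro ballI)
  fix A B assume A: "A \<in> cObj (gauss C X)" and B: "B \<in> cObj (gauss C X)"
  let ?FA = "Fo A" and ?FB = "Fo B"
  show "cComp (gauss D (Fo X)) (gauss_map Fm (mSym (gauss C X) A B))
      (phi A B, dZero D (Fo (dBp C A B)) (Fo (dBp C A B)), dZero D (Fo X) (Fo (dBp C A B)))
  = cComp (gauss D (Fo X)) (phi B A, dZero D (Fo (dBp C B A)) (Fo (dBp C B A)), dZero D (Fo X) (Fo (dBp C B A)))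
      (mSym (gauss D (Fo X)) (Fo A) (Fo B))"
    using A B X
    apply (simp only: gauss_map_simp gauss_sym gauss_obj
       gcomp_t[where C=D and A="dBp D ?FA ?FB" and B="Fo (dBp C A B)" and E="Fo (dBp C B A)"
          and q="Fm (dZero C (dBp C B A) (dBp C B A))"]
       gcomp_t[where C=D and A="dBp D ?FA ?FB" and B="dBp D ?FB ?FA" and E="Fo (dBp C B A)"
          and g="phi B A"])
    apply (simp add: phi_def D.ta_assoc)
    apply (rule D.ta_comm; simp)
    done
qed

lemma m_copy: assumes X: "X \<in> cObj C" shows
 "\<forall>A\<in>cObj (gauss C X). gauss_map Fm (mCopy (gauss C X) A) =
     cComp (gauss D (Fo X)) (phi A A, dZero D (Fo (dBp C A A)) (Fo (dBp C A A)), dZero D (Fo X) (Fo (dBp C A A)))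
       (mCopy (gauss D (Fo X)) (Fo A))"
proof (intro ballI)
  fix A assume A: "A \<in> cObj (gauss C X)"
  show "gauss_map Fm (mCopy (gauss C X) A) =
     cComp (gauss D (Fo X)) (phi A A, dZero D (Fo (dBp C A A)) (Fo (dBp C A A)), dZero D (Fo X) (Fo (dBp C A A)))
       (mCopy (gauss D (Fo X)) (Fo A))"
    using A X
    apply (simp only: gauss_map_simp gauss_copy gauss_obj
       gcomp_t[where C=D and A="Fo A" and B="dBp D (Fo A) (Fo A)" and E="Fo (dBp C A A)" and g="phi A A"])
    apply (simp add: phi_def D.ta_assoc)
    done
qed

lemma m_del: assumes X: "X \<in> cObj C" shows
 "\<forall>A\<in>cObj (gauss C X). gauss_map Fm (mDel (gauss C X) A) =
    cComp (gauss D (Fo X)) (dZero D (dZObj D) (Fo (dZObj C)), dZero D (Fo (dZObj C)) (Fo (dZObj C)), dZero D (Fo X) (Fo (dZObj C)))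
      (mDel (gauss D (Fo X)) (Fo A))"
proof (intro ballI)
  fix A assume A: "A \<in> cObj (gauss C X)"
  show "gauss_map Fm (mDel (gauss C X) A) =
    cComp (gauss D (Fo X)) (dZero D (dZObj D) (Fo (dZObj C)), dZero D (Fo (dZObj C)) (Fo (dZObj C)), dZero D (Fo X) (Fo (dZObj C)))
      (mDel (gauss D (Fo X)) (Fo A))"
    using A X
    apply (simp only: gauss_map_simp gauss_del gauss_obj
       gcomp_t[where C=D and A="Fo A" and B="dZObj D" and E="Fo (dZObj C)"])
    apply simp
    done
qed

end

theorem mainTheorem5:
  fixes C :: "('o,'m) dacat" and D :: "('p,'n) dacat"
    and Fo :: "'o \<Rightarrow> 'p" and Fm :: "'m \<Rightarrow> 'n" and X :: 'o
  assumes "is_dagger_additive C" and "is_dagger_additive D"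
    and "is_dagger_additive_functor C D Fo Fm"
    and "X \<in> cObj C"
  shows "is_markov_functor (gauss C X) (gauss D (Fo X)) Fo (gauss_map Fm)"
proof -
  interpret DF C D Fo Fm by (rule DF.intro) (simp_all add: DA_def DF_axioms_def assms)
  show ?thesis unfolding is_markov_functor_def
    apply (intro conjI)
        apply (simp add: assms(4))
       apply (rule m_hom[OF assms(4)])
      apply (rule m_id[OF assms(4)])
     apply (rule m_comp[OF assms(4)])
    apply (rule exI[of _ "\<lambda>A B. (phi A B, dZero D (Fo (dBp C A B)) (Fo (dBp C A B)), dZero D (Fo X) (Fo (dBp C A B)))"])
    apply (rule exI[of _ "(dZero D (dZObj D) (Fo (dZObj C)), dZero D (Fo (dZObj C)) (Fo (dZObj C)), dZero D (Fo X) (Fo (dZObj C)))"])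
    apply (intro conjI)
            apply (rule m_iso0[OF assms(4)])
           apply (rule m_iso[OF assms(4)])
          apply (rule m_nat[OF assms(4)])
         apply (rule m_assoc[OF assms(4)])
        apply (rule m_lu[OF assms(4)])
       apply (rule m_ru[OF assms(4)])
      apply (rule m_sym[OF assms(4)])
     apply (rule m_copy[OF assms(4)])
    apply (rule m_del[OF assms(4)])
    done
qed
end
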